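(* Let $d\ge1$ and let $X_1,\dots,X_d$ be non-negative integrable random variables such that $\mathbb{P}(X_i>t,X_j>t)\le\mathbb{P}(X_i>t)\mathbb{P}(X_j>t)$ for all $i\neq j\in[d]$ and all $t>0$. Let $\tilde X_1,\dots,\tilde X_d$ be mutually independent with $\tilde X_i$ equal in distribution to $X_i$. Then $\mathbb{E}\max_{i\in[d]}X_i\ge\frac12\mathbb{E}\max_{i\in[d]}\tilde X_i$.
   Context: $[d]=\{1,\dots,d\}$. *)

theory Defs
  imports "HOL-Probability.Probability"
begin

end

theory Submission
  imports Defs
begin


lemma layer_cake:
  fixes f :: "'a \<Rightarrow> real"
  assumes "sigma_finite_measure M" and f[measurable]: "f \<in> borel_measurable M"
  shows "(\<integral>\<^sup>+x. ennreal (f x) \<partial>M) =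
    (\<integral>\<^sup>+t. indicator {0<..} t * emeasure M {x\<in>space M. t < f x} \<partial>lborel)"
proof -
  interpret pair_sigma_finite lborel M
    using assms(1) by (simp add: pair_sigma_finite_def lborel.sigma_finite_measure_axioms)
  have pt: "ennreal (f x) = (\<integral>\<^sup>+t. indicator {0<..} t * indicator {t. t < f x} t \<partial>lborel)" for x
  proof -
    have "(\<integral>\<^sup>+t. indicator {0<..} t * indicator {t. t < f x} t \<partial>lborel)
        = (\<integral>\<^sup>+t. indicator {0<..<f x} t \<partial>lborel)"
      by (intro nn_integral_cong) (auto simp: indicator_def)
    also have "\<dots> = emeasure lborel {0<..<f x}" by simp
    also have "\<dots> = ennreal (f x)"
      by (cases "0 < f x") (auto simp: ennreal_neg)
    finally show ?thesis by simp
  qed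
  have "(\<integral>\<^sup>+x. ennreal (f x) \<partial>M) =
     (\<integral>\<^sup>+x. (\<integral>\<^sup>+t. indicator {0<..} t * indicator {t. t < f x} t \<partial>lborel) \<partial>M)"
    by (simp add: pt[symmetric])
  also have "\<dots> = (\<integral>\<^sup>+t. (\<integral>\<^sup>+x. indicator {0<..} t * indicator {t. t < f x} t \<partial>M) \<partial>lborel)"
    by (rule Fubini'[where f="\<lambda>t x. indicator {0<..} t * indicator {t. t < f x} t"]) measurable
  also have "\<dots> = (\<integral>\<^sup>+t. indicator {0<..} t * emeasure M {x\<in>space M. t < f x} \<partial>lborel)"
  proof (intro nn_integral_cong)
    fix t :: real
    have "(\<integral>\<^sup>+x. indicator {0<..} t * indicator {t. t < f x} t \<partial>M) =
       (\<integral>\<^sup>+x. indicator {0<..} t * indicator {x\<in>space M. t < f x} x \<partial>M)"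
      by (intro nn_integral_cong) (auto simp: indicator_def)
    also have "\<dots> = indicator {0<..} t * emeasure M {x\<in>space M. t < f x}"
      by (rule nn_integral_cmult_indicator) measurable
    finally show "(\<integral>\<^sup>+x. indicator {0<..} t * indicator {t. t < f x} t \<partial>M) = indicator {0<..} t * emeasure M {x\<in>space M. t < f x}" .
  qed
  finally show ?thesis .
qed



lemma chung:
  assumes P: "prob_space M" and fin: "finite I"
    and A[measurable]: "\<And>i. i \<in> I \<Longrightarrow> A i \<in> sets M"
    and neg: "\<And>i j. i \<in> I \<Longrightarrow> j \<in> I \<Longrightarrow> i \<noteq> j \<Longrightarrow> measure M (A i \<inter> A j) \<le> measure M (A i) * measure M (A j)"
  shows "measure M (\<Union>i\<in>I. A i) \<ge> (\<Sum>i\<in>I. measure M (A i)) / (1 + (\<Sum>i\<in>I. measure M (A i)))"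
proof -
  interpret prob_space M by fact
  define S where "S = (\<Sum>i\<in>I. measure M (A i))"
  have S0: "S \<ge> 0" unfolding S_def by (simp add: sum_nonneg)
  define a where "a = 1 / (1 + S)"
  define n where "n \<omega> = (\<Sum>i\<in>I. indicator (A i) \<omega> :: real)" for \<omega>
  have U: "(\<Union>i\<in>I. A i) \<in> sets M" using fin A by blast
  have sq: "(\<Sum>i\<in>I. \<Sum>j\<in>I. indicator (A i \<inter> A j) \<omega>) = (n \<omega>)^2" for \<omega>
    unfolding n_def power2_eq_square sum_product by (simp add: indicator_inter_arith)
  have pw: "2 * a * n \<omega> - a^2 * (\<Sum>i\<in>I. \<Sum>j\<in>I. indicator (A i \<inter> A j) \<omega>)
       \<le> indicator (\<Union>i\<in>I. A i) \<omega>" for \<omega>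
  proof (cases "\<omega> \<in> (\<Union>i\<in>I. A i)")
    case True
    have "2 * a * n \<omega> - a^2 * (n \<omega>)^2 \<le> 1"
      using zero_le_power2[of "a * n \<omega> - 1"] by (simp add: power2_eq_square algebra_simps)
    then show ?thesis using True by (simp add: sq)
  next
    case False
    then have "n \<omega> = 0" unfolding n_def by (auto intro!: sum.neutral)
    then show ?thesis using False by (simp add: sq)
  qed
  have ind: "integrable M (indicator B :: _ \<Rightarrow> real)" if "B \<in> sets M" for B
    using that by (simp add: emeasure_finite less_top[symmetric])
  have intn: "integrable M n" unfolding n_def
    by (rule Bochner_Integration.integrable_sum) (auto intro: ind)
  have intQ: "integrable M (\<lambda>\<omega>. \<Sum>i\<in>I. \<Sum>j\<in>I. indicator (A i \<inter> A j) \<omega> :: real)"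
    by (rule Bochner_Integration.integrable_sum, rule Bochner_Integration.integrable_sum) (auto intro: ind)
  have int1: "integrable M (\<lambda>\<omega>. 2 * a * n \<omega> - a^2 * (\<Sum>i\<in>I. \<Sum>j\<in>I. indicator (A i \<inter> A j) \<omega>))"
    using intn intQ by auto
  have En: "(\<integral>\<omega>. n \<omega> \<partial>M) = S" unfolding n_def S_def
    by (subst Bochner_Integration.integral_sum) (auto intro!: ind sum.cong simp: Int_absorb2 sets.sets_into_space)
  have EQ1: "(\<integral>\<omega>. (\<Sum>j\<in>I. indicator (A i \<inter> A j) \<omega> :: real) \<partial>M) = (\<Sum>j\<in>I. measure M (A i \<inter> A j))" if "i \<in> I" for i
    using that by (subst Bochner_Integration.integral_sum) (auto intro!: ind sum.cong simp: Int_absorb2 sets.sets_into_space)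
  have EQ: "(\<integral>\<omega>. (\<Sum>i\<in>I. \<Sum>j\<in>I. indicator (A i \<inter> A j) \<omega> :: real) \<partial>M) = (\<Sum>i\<in>I. \<Sum>j\<in>I. measure M (A i \<inter> A j))"
    by (subst Bochner_Integration.integral_sum, rule Bochner_Integration.integrable_sum, auto intro: ind)
       (auto intro!: sum.cong simp: EQ1)
  have "2 * a * S - a^2 * (\<Sum>i\<in>I. \<Sum>j\<in>I. measure M (A i \<inter> A j))
     = (\<integral>\<omega>. 2 * a * n \<omega> - a^2 * (\<Sum>i\<in>I. \<Sum>j\<in>I. indicator (A i \<inter> A j) \<omega>) \<partial>M)"
    using intn intQ by (simp add: En EQ)
  also have "\<dots> \<le> (\<integral>\<omega>. indicator (\<Union>i\<in>I. A i) \<omega> \<partial>M)"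
    by (intro integral_mono int1 ind U pw)
  also have "\<dots> = measure M (\<Union>i\<in>I. A i)" using U by (simp add: Int_absorb2 sets.sets_into_space)
  finally have L: "2 * a * S - a^2 * (\<Sum>i\<in>I. \<Sum>j\<in>I. measure M (A i \<inter> A j)) \<le> measure M (\<Union>i\<in>I. A i)" .
  have "(\<Sum>i\<in>I. \<Sum>j\<in>I. measure M (A i \<inter> A j)) \<le> (\<Sum>i\<in>I. \<Sum>j\<in>I. measure M (A i) * measure M (A j) + (if i = j then measure M (A i) else 0))"
  proof (intro sum_mono)
    fix i j assume "i \<in> I" "j \<in> I"
    then show "measure M (A i \<inter> A j) \<le> measure M (A i) * measure M (A j) + (if i = j then measure M (A i) else 0)"
      using neg[of i j] by (cases "i = j") auto
  qed
  also have "\<dots> = S^2 + S"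
    unfolding S_def power2_eq_square sum_product using fin by (simp add: sum.distrib)
  finally have Q: "(\<Sum>i\<in>I. \<Sum>j\<in>I. measure M (A i \<inter> A j)) \<le> S^2 + S" .
  have "a^2 * (\<Sum>i\<in>I. \<Sum>j\<in>I. measure M (A i \<inter> A j)) \<le> a^2 * (S^2 + S)"
    by (intro mult_left_mono Q) simp
  moreover have "2 * a * S - a^2 * (S^2 + S) = S / (1 + S)"
  proof -
    have "S^2 + S = S * (1 + S)" by (simp add: power2_eq_square algebra_simps)
    moreover have "a * (1 + S) = 1" unfolding a_def using S0 by simp
    moreover have "a^2 * (S * (1 + S)) = (a * S) * (a * (1 + S))" by (simp add: power2_eq_square algebra_simps)
    ultimately have "a^2 * (S^2 + S) = a * S" by simp
    then show ?thesis unfolding a_def by simp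
  qed
  ultimately show ?thesis using L unfolding S_def[symmetric] by linarith
qed

theorem corollary13:
  fixes M :: "'a measure" and N :: "'b measure"
    and X :: "nat \<Rightarrow> 'a \<Rightarrow> real" and Y :: "nat \<Rightarrow> 'b \<Rightarrow> real"
    and d :: nat
  assumes "prob_space M" and "prob_space N"
    and "d \<ge> 1"
    and rvX: "\<And>i. i \<in> {1..d} \<Longrightarrow> X i \<in> borel_measurable M"
    and nonneg: "\<And>i \<omega>. i \<in> {1..d} \<Longrightarrow> \<omega> \<in> space M \<Longrightarrow> X i \<omega> \<ge> 0"
    and intX: "\<And>i. i \<in> {1..d} \<Longrightarrow> integrable M (X i)"
    and negdep: "\<And>i j t. i \<in> {1..d} \<Longrightarrow> j \<in> {1..d} \<Longrightarrow> i \<noteq> j \<Longrightarrow> t > 0 \<Longrightarrow>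
        measure M {\<omega> \<in> space M. X i \<omega> > t \<and> X j \<omega> > t}
          \<le> measure M {\<omega> \<in> space M. X i \<omega> > t} * measure M {\<omega> \<in> space M. X j \<omega> > t}"
    and indepY: "prob_space.indep_vars N (\<lambda>_. borel) Y {1..d}"
    and distY: "\<And>i. i \<in> {1..d} \<Longrightarrow> distr N borel (Y i) = distr M borel (X i)"
  shows "(\<integral>\<omega>. (MAX i\<in>{1..d}. X i \<omega>) \<partial>M) \<ge> (1/2) * (\<integral>\<omega>. (MAX i\<in>{1..d}. Y i \<omega>) \<partial>N)"
  proof -
  interpret PM: prob_space M by fact
  interpret PN: prob_space N by fact
  define I where "I = {1..d}"
  have finI: "finite I" and neI: "I \<noteq> {}" using assms(3) by (auto simp: I_def)
  define MX where "MX \<omega> = Max ((\<lambda>i. X i \<omega>) ` I)" for \<omega>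
  define MY where "MY \<omega> = Max ((\<lambda>i. Y i \<omega>) ` I)" for \<omega>
  have rvY: "Y i \<in> borel_measurable N" if "i \<in> I" for i
    using indepY that unfolding PN.indep_vars_def2 I_def by auto
  have mMX[measurable]: "MX \<in> borel_measurable M"
    unfolding MX_def by (rule borel_measurable_Max[OF finI]) (auto simp: I_def intro: rvX)
  have mMY[measurable]: "MY \<in> borel_measurable N"
    unfolding MY_def by (rule borel_measurable_Max[OF finI]) (auto intro: rvY)
  have MXgt: "t < MX \<omega> \<longleftrightarrow> (\<exists>i\<in>I. t < X i \<omega>)" for t \<omega>
    unfolding MX_def using finI neI by (simp add: Max_gr_iff)
  have MYgt: "t < MY \<omega> \<longleftrightarrow> (\<exists>i\<in>I. t < Y i \<omega>)" for t \<omega>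
    unfolding MY_def using finI neI by (simp add: Max_gr_iff)
  have MX0: "0 \<le> MX \<omega>" if "\<omega> \<in> space M" for \<omega>
  proof -
    obtain i where "i \<in> I" using neI by auto
    then have "X i \<omega> \<le> MX \<omega>" unfolding MX_def using finI by (intro Max_ge) auto
    moreover have "0 \<le> X i \<omega>" using nonneg \<open>i \<in> I\<close> that by (auto simp: I_def)
    ultimately show ?thesis by linarith
  qed
  have MXle: "MX \<omega> \<le> (\<Sum>i\<in>I. X i \<omega>)" if "\<omega> \<in> space M" for \<omega>
    unfolding MX_def using finI neI that nonneg
    by (subst Max_le_iff) (auto simp: I_def intro!: member_le_sum)
  have intMX: "integrable M MX"
  proof (rule Bochner_Integration.integrable_bound)
    show "integrable M (\<lambda>\<omega>. \<Sum>i\<in>I. X i \<omega>)"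
      by (rule Bochner_Integration.integrable_sum) (auto simp: I_def intro: intX)
    show "AE \<omega> in M. norm (MX \<omega>) \<le> norm (\<Sum>i\<in>I. X i \<omega>)"
      using MX0 MXle by (auto intro!: AE_I2 order_trans[OF _ abs_ge_self])
  qed simp
  have EMX0: "0 \<le> (\<integral>\<omega>. MX \<omega> \<partial>M)" using MX0 by (simp add: integral_nonneg)
  have keyt: "measure N {\<omega>\<in>space N. t < MY \<omega>} \<le> 2 * measure M {\<omega>\<in>space M. t < MX \<omega>}"
    if t: "t > 0" for t
  proof -
    define A where "A i = {\<omega>\<in>space M. t < X i \<omega>}" for i
    define S where "S = (\<Sum>i\<in>I. measure M (A i))"
    have S0: "S \<ge> 0" unfolding S_def by (simp add: sum_nonneg)
    have Ameas: "A i \<in> sets M" if "i \<in> I" for i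
      unfolding A_def using rvX[of i] that by (auto simp: I_def)
    have "S / (1 + S) \<le> measure M (\<Union>i\<in>I. A i)"
      unfolding S_def
    proof (rule chung[OF assms(1) finI Ameas])
      fix i j assume "i \<in> I" "j \<in> I" "i \<noteq> j"
      moreover have "A i \<inter> A j = {\<omega> \<in> space M. X i \<omega> > t \<and> X j \<omega> > t}" unfolding A_def by auto
      ultimately show "measure M (A i \<inter> A j) \<le> measure M (A i) * measure M (A j)"
        using negdep[of i j t] t unfolding A_def by (auto simp: I_def)
    qed auto
    also have "(\<Union>i\<in>I. A i) = {\<omega>\<in>space M. t < MX \<omega>}" unfolding A_def MXgt by auto
    finally have low: "S / (1 + S) \<le> measure M {\<omega>\<in>space M. t < MX \<omega>}" .
    define B where "B i = {\<omega>\<in>space N. t < Y i \<omega>}" for i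
    have Bmeas: "B i \<in> sets N" if "i \<in> I" for i
      unfolding B_def using rvY[of i] that by auto
    have pB: "measure N (B i) = measure M (A i)" if "i \<in> I" for i
    proof -
      have "measure N (B i) = measure (distr N borel (Y i)) {t<..}"
        using rvY[OF that] by (subst measure_distr) (auto simp: B_def intro!: arg_cong[where f="measure N"])
      also have "\<dots> = measure (distr M borel (X i)) {t<..}" using distY that by (simp add: I_def)
      also have "\<dots> = measure M (A i)"
        using rvX[of i] that by (subst measure_distr) (auto simp: A_def I_def intro!: arg_cong[where f="measure M"])
      finally show ?thesis .
    qed
    have "{\<omega>\<in>space N. t < MY \<omega>} = (\<Union>i\<in>I. B i)" unfolding B_def MYgt by auto
    then have "measure N {\<omega>\<in>space N. t < MY \<omega>} \<le> (\<Sum>i\<in>I. measure N (B i))"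
      using finI Bmeas by (auto intro!: measure_subadditive_finite PN.emeasure_finite)
    also have "\<dots> = S" unfolding S_def using pB by simp
    finally have up1: "measure N {\<omega>\<in>space N. t < MY \<omega>} \<le> S" .
    have up2: "measure N {\<omega>\<in>space N. t < MY \<omega>} \<le> 1" by simp
    have "min 1 S \<le> 2 * (S / (1 + S))"
    proof (cases "S \<le> 1")
      case True
      then have "S * S \<le> S" using S0 by (simp add: mult_left_le)
      then have "S \<le> 2 * (S / (1 + S))" using S0 by (simp add: field_simps)
      then show ?thesis by simp
    next
      case False
      then have "1 \<le> 2 * (S / (1 + S))" using S0 by (simp add: field_simps)
      then show ?thesis by simp
    qed
    then show ?thesis using low up1 up2 by linarith
  qed
  have "(\<integral>\<^sup>+\<omega>. ennreal (MY \<omega>) \<partial>N) =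
      (\<integral>\<^sup>+t. indicator {0<..} t * emeasure N {x\<in>space N. t < MY x} \<partial>lborel)"
    by (rule layer_cake) (auto simp: PN.sigma_finite_measure_axioms)
  also have "\<dots> \<le> (\<integral>\<^sup>+t. 2 * (indicator {0<..} t * emeasure M {x\<in>space M. t < MX x}) \<partial>lborel)"
  proof (rule nn_integral_mono)
    fix t :: real
    show "indicator {0<..} t * emeasure N {x\<in>space N. t < MY x} \<le> 2 * (indicator {0<..} t * emeasure M {x\<in>space M. t < MX x})"
    proof (cases "t > 0")
      case True
      have "ennreal (measure N {x\<in>space N. t < MY x}) \<le> ennreal (2 * measure M {x\<in>space M. t < MX x})"
        using keyt[OF True] by (rule ennreal_leI)
      then show ?thesis using True
        by (simp add: PN.emeasure_eq_measure PM.emeasure_eq_measure ennreal_mult)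
    qed simp
  qed
  also have "\<dots> = 2 * (\<integral>\<^sup>+t. indicator {0<..} t * emeasure M {x\<in>space M. t < MX x} \<partial>lborel)"
    by (rule nn_integral_cmult) measurable
  also have "\<dots> = 2 * (\<integral>\<^sup>+\<omega>. ennreal (MX \<omega>) \<partial>M)"
    by (subst layer_cake) (auto simp: PM.sigma_finite_measure_axioms)
  also have "\<dots> = 2 * ennreal (\<integral>\<omega>. MX \<omega> \<partial>M)"
    using intMX MX0 by (subst nn_integral_eq_integral) (auto intro!: AE_I2)
  also have "\<dots> = ennreal (2 * (\<integral>\<omega>. MX \<omega> \<partial>M))"
    using EMX0 by (simp add: ennreal_mult)
  finally have NN: "(\<integral>\<^sup>+\<omega>. ennreal (MY \<omega>) \<partial>N) \<le> ennreal (2 * (\<integral>\<omega>. MX \<omega> \<partial>M))" .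
  have "(\<integral>\<omega>. MY \<omega> \<partial>N) \<le> 2 * (\<integral>\<omega>. MX \<omega> \<partial>M)"
  proof (cases "integrable N MY")
    case True
    have "(\<integral>\<omega>. MY \<omega> \<partial>N) \<le> (\<integral>\<omega>. max 0 (MY \<omega>) \<partial>N)"
      using True by (intro integral_mono) auto
    also have "\<dots> = enn2real (\<integral>\<^sup>+\<omega>. ennreal (max 0 (MY \<omega>)) \<partial>N)"
      by (rule integral_eq_nn_integral) auto
    also have "(\<integral>\<^sup>+\<omega>. ennreal (max 0 (MY \<omega>)) \<partial>N) = (\<integral>\<^sup>+\<omega>. ennreal (MY \<omega>) \<partial>N)"
      by (intro nn_integral_cong) (auto simp: max_def ennreal_neg)
    also have "enn2real (\<integral>\<^sup>+\<omega>. ennreal (MY \<omega>) \<partial>N) \<le> enn2real (ennreal (2 * (\<integral>\<omega>. MX \<omega> \<partial>M)))"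
      by (rule enn2real_mono[OF NN]) simp
    also have "\<dots> = 2 * (\<integral>\<omega>. MX \<omega> \<partial>M)" using EMX0 by simp
    finally show ?thesis .
  next
    case False
    then show ?thesis using EMX0 by (simp add: not_integrable_integral_eq)
  qed
  then show ?thesis unfolding MX_def MY_def I_def by simp
qed

end
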